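(* Let $\{A_i\}_{i\in I}$ be a family of groups. Then $\mathrm{TorLen}( *_{i\in I}A_i)=\sup\{\mathrm{TorLen}(A_i)\}_{i\in I}$.
   Context: For a group $G$, define $\mathrm{Tor}_0(G)=\{e\}$ and inductively $\mathrm{Tor}_{i+1}(G)$ to be the normal closure in $G$ of $\{g\in G : g\,\mathrm{Tor}_i(G)\text{ has finite order in } G/\mathrm{Tor}_i(G)\}$; set $\mathrm{Tor}_\infty(G)=\bigcup_{i}\mathrm{Tor}_i(G)$. The torsion length $\mathrm{TorLen}(G)$ is the smallest $n\ge 0$ with $\mathrm{Tor}_n(G)=\mathrm{Tor}_\infty(G)$, and $\infty$ if no such $n$ exists; the supremum is taken in $\mathbb{N}\cup\{\infty\}$. *)

theory Defs
  imports "HOL-Algebra.Algebra" "HOL-Library.Extended_Nat"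
begin

definition normal_closure :: "('a, 'b) monoid_scheme \<Rightarrow> 'a set \<Rightarrow> 'a set" where
  "normal_closure G S = \<Inter> {N. N \<lhd> G \<and> S \<subseteq> N}"

fun Tor :: "('a, 'b) monoid_scheme \<Rightarrow> nat \<Rightarrow> 'a set" where
  "Tor G 0 = {\<one>\<^bsub>G\<^esub>}"
| "Tor G (Suc n) = normal_closure G
     {g \<in> carrier G. \<exists>k::nat. k > 0 \<and>
        (Tor G n #>\<^bsub>G\<^esub> g) [^]\<^bsub>G Mod (Tor G n)\<^esub> k = \<one>\<^bsub>G Mod (Tor G n)\<^esub>}"

definition Tor_inf :: "('a, 'b) monoid_scheme \<Rightarrow> 'a set" where
  "Tor_inf G = (\<Union>n. Tor G n)"

definition TorLen :: "('a, 'b) monoid_scheme \<Rightarrow> enat" where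
  "TorLen G = (if \<exists>n. Tor G n = Tor_inf G
               then enat (LEAST n. Tor G n = Tor_inf G) else \<infinity>)"

definition reduced_word :: "'i set \<Rightarrow> ('i \<Rightarrow> ('a, 'b) monoid_scheme) \<Rightarrow> ('i \<times> 'a) list \<Rightarrow> bool" where
  "reduced_word I A w \<longleftrightarrow>
     (\<forall>(i, a) \<in> set w. i \<in> I \<and> a \<in> carrier (A i) \<and> a \<noteq> \<one>\<^bsub>A i\<^esub>) \<and>
     successively (\<lambda>x y. fst x \<noteq> fst y) w"

fun fp_cons :: "('i \<Rightarrow> ('a, 'b) monoid_scheme) \<Rightarrow> 'i \<times> 'a \<Rightarrow> ('i \<times> 'a) list \<Rightarrow> ('i \<times> 'a) list" where
  "fp_cons A (i, a) [] = (if a = \<one>\<^bsub>A i\<^esub> then [] else [(i, a)])"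
| "fp_cons A (i, a) ((j, b) # w) =
     (if i = j then (let c = a \<otimes>\<^bsub>A i\<^esub> b in if c = \<one>\<^bsub>A i\<^esub> then w else (i, c) # w)
      else if a = \<one>\<^bsub>A i\<^esub> then (j, b) # w else (i, a) # (j, b) # w)"

definition fp_mult :: "('i \<Rightarrow> ('a, 'b) monoid_scheme) \<Rightarrow> ('i \<times> 'a) list \<Rightarrow> ('i \<times> 'a) list \<Rightarrow> ('i \<times> 'a) list" where
  "fp_mult A w v = foldr (fp_cons A) w v"

definition free_product :: "'i set \<Rightarrow> ('i \<Rightarrow> ('a, 'b) monoid_scheme) \<Rightarrow> ('i \<times> 'a) list monoid" where
  "free_product I A = \<lparr>carrier = {w. reduced_word I A w}, monoid.mult = fp_mult A, one = []\<rparr>"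

end

theory Submission
  imports Defs
begin

lemma ncl_normal:
  fixes G (structure)
  assumes "group G" "S \<subseteq> carrier G"
  shows "normal_closure G S \<lhd> G"
proof -
  interpret group G by fact
  let ?A = "{N. N \<lhd> G \<and> S \<subseteq> N}"
  have ne: "carrier G \<in> ?A" using assms(2) by (simp add: normal_invI subgroup_self)
  have sg: "subgroup (\<Inter>?A) G"
    by (rule subgroups_Inter) (use ne normal_imp_subgroup in auto)
  show ?thesis unfolding normal_closure_def
  proof (rule normal_invI[OF sg])
    fix x h assume "x \<in> carrier G" "h \<in> \<Inter>?A"
    then show "x \<otimes> h \<otimes> inv x \<in> \<Inter>?A"
      by (auto intro: normal.inv_op_closed2)
  qed
qed

lemma ncl_sub: "S \<subseteq> carrier G \<Longrightarrow> group G \<Longrightarrow> S \<subseteq> normal_closure G S"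
  unfolding normal_closure_def by auto

lemma ncl_least: "N \<lhd> G \<Longrightarrow> S \<subseteq> N \<Longrightarrow> normal_closure G S \<subseteq> N"
  unfolding normal_closure_def by auto

lemma ncl_mono: "group G \<Longrightarrow> T \<subseteq> carrier G \<Longrightarrow> S \<subseteq> T \<Longrightarrow> normal_closure G S \<subseteq> normal_closure G T"
  by (meson ncl_least ncl_normal ncl_sub order_trans)

lemma Tor_normal: "group G \<Longrightarrow> Tor G n \<lhd> G"
  by (cases n) (auto intro: ncl_normal group.one_is_normal)

lemma rcos_pow_Mod:
  fixes G (structure)
  assumes "N \<lhd> G" "g \<in> carrier G"
  shows "(N #>\<^bsub>G\<^esub> g) [^]\<^bsub>G Mod N\<^esub> (k::nat) = N #>\<^bsub>G\<^esub> (g [^]\<^bsub>G\<^esub> k)"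
proof (induction k)
  case 0
  have "group G" using assms(1) normal.axioms(2) by blast
  then show ?case using assms by (simp add: group.coset_mult_one normal_imp_subgroup subgroup.subset)
next
  case (Suc k)
  interpret normal N G by fact
  have "(N #> g) [^]\<^bsub>G Mod N\<^esub> Suc k = (N #> g) [^]\<^bsub>G Mod N\<^esub> k \<otimes>\<^bsub>G Mod N\<^esub> (N #> g)"
    by (simp add: nat_pow_def)
  also have "\<dots> = (N #> (g [^] k)) <#> (N #> g)" using Suc by (simp add: FactGroup_def)
  also have "\<dots> = N #> (g [^] k \<otimes> g)" using assms by (simp add: rcos_sum)
  finally show ?case by simp
qed

lemma rcos_eq_iff:
  assumes "N \<lhd> G" "x \<in> carrier G"
  shows "N #>\<^bsub>G\<^esub> x = N \<longleftrightarrow> x \<in> N"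
proof -
  interpret normal N G by fact
  show ?thesis using assms
    by (metis coset_join2 is_subgroup rcos_self)
qed

definition TorS :: "('a, 'b) monoid_scheme \<Rightarrow> 'a set \<Rightarrow> 'a set" where
  "TorS G N = {g \<in> carrier G. \<exists>k::nat. k > 0 \<and> g [^]\<^bsub>G\<^esub> k \<in> N}"

lemma Tor_Suc: "group G \<Longrightarrow> Tor G (Suc n) = normal_closure G (TorS G (Tor G n))"
proof -
  assume G: "group G"
  let ?N = "Tor G n"
  have N: "?N \<lhd> G" by (rule Tor_normal[OF G])
  have key: "((?N #>\<^bsub>G\<^esub> g) [^]\<^bsub>G Mod ?N\<^esub> k = \<one>\<^bsub>G Mod ?N\<^esub>) \<longleftrightarrow> g [^]\<^bsub>G\<^esub> k \<in> ?N"
    if g: "g \<in> carrier G" for g and k :: nat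
  proof -
    have "g [^]\<^bsub>G\<^esub> k \<in> carrier G" using g G by (simp add: group.is_monoid monoid.nat_pow_closed)
    then show ?thesis
      by (simp only: rcos_pow_Mod[OF N g] one_FactGroup rcos_eq_iff[OF N])
  qed
  have "{g \<in> carrier G. \<exists>k::nat. k > 0 \<and>
        (?N #>\<^bsub>G\<^esub> g) [^]\<^bsub>G Mod ?N\<^esub> k = \<one>\<^bsub>G Mod ?N\<^esub>} = TorS G ?N"
    unfolding TorS_def using key by blast
  then show ?thesis by (simp only: Tor.simps)
qed

lemma Tor_sub_carrier: "group G \<Longrightarrow> Tor G n \<subseteq> carrier G"
  using Tor_normal normal_imp_subgroup subgroup.subset by blast

lemma Tor_mono_Suc: "group G \<Longrightarrow> Tor G n \<subseteq> Tor G (Suc n)"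
proof -
  assume G: "group G"
  have "Tor G n \<subseteq> TorS G (Tor G n)"
  proof
    fix x assume x: "x \<in> Tor G n"
    then have xc: "x \<in> carrier G" using Tor_sub_carrier[OF G] by blast
    then have "x [^]\<^bsub>G\<^esub> (1::nat) = x" using G by (simp add: group.is_monoid monoid.nat_pow_eone)
    then show "x \<in> TorS G (Tor G n)" unfolding TorS_def using x xc
      by (intro CollectI conjI exI[of _ "1::nat"]) auto
  qed
  also have "\<dots> \<subseteq> Tor G (Suc n)" unfolding Tor_Suc[OF G]
    by (rule ncl_sub) (auto simp: TorS_def G)
  finally show ?thesis .
qed

lemma Tor_mono: assumes "group G" "m \<le> n" shows "Tor G m \<subseteq> Tor G n"
  using assms(2)
proof (induction n rule: dec_induct)
  case (step n)
  then show ?case using Tor_mono_Suc[of G n] assms(1) by blast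
qed simp

lemma Tor_stable:
  assumes G: "group G" and st: "Tor G (Suc n) = Tor G n" and mn: "n \<le> m"
  shows "Tor G m = Tor G n"
  using mn
proof (induction m rule: dec_induct)
  case (step m)
  have "Tor G (Suc m) = normal_closure G (TorS G (Tor G m))" by (rule Tor_Suc[OF G])
  also have "\<dots> = normal_closure G (TorS G (Tor G n))" using step by (simp only:)
  also have "\<dots> = Tor G (Suc n)" by (rule Tor_Suc[OF G, symmetric])
  also have "\<dots> = Tor G n" by (rule st)
  finally show ?case .
qed (rule refl)

definition PT :: "('a, 'b) monoid_scheme \<Rightarrow> nat \<Rightarrow> bool" where
  "PT G n \<longleftrightarrow> Tor G n = Tor_inf G"

lemma PT_iff: "group G \<Longrightarrow> PT G n \<longleftrightarrow> Tor G (Suc n) \<subseteq> Tor G n"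
proof
  assume G: "group G" and "PT G n"
  then show "Tor G (Suc n) \<subseteq> Tor G n" unfolding PT_def Tor_inf_def by blast
next
  assume G: "group G" and "Tor G (Suc n) \<subseteq> Tor G n"
  then have st: "Tor G (Suc n) = Tor G n" using Tor_mono_Suc[OF G] by blast
  have "Tor G m \<subseteq> Tor G n" for m
  proof (cases "m \<le> n")
    case True then show ?thesis by (rule Tor_mono[OF G])
  next
    case False then show ?thesis using Tor_stable[OF G st, of m] by simp
  qed
  then show "PT G n" unfolding PT_def Tor_inf_def by blast
qed

lemma PT_up: assumes "group G" "PT G m" "m \<le> n" shows "PT G n"
proof -
  have "Tor G n \<subseteq> Tor_inf G" unfolding Tor_inf_def by blast
  moreover have "Tor_inf G \<subseteq> Tor G n" using assms Tor_mono[OF assms(1,3)] unfolding PT_def by blast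
  ultimately show ?thesis unfolding PT_def by blast
qed

lemma TorLen_le_iff: "group G \<Longrightarrow> TorLen G \<le> enat n \<longleftrightarrow> PT G n"
proof -
  assume G: "group G"
  have TL: "TorLen G = (if \<exists>m. PT G m then enat (LEAST m. PT G m) else \<infinity>)"
    unfolding TorLen_def PT_def by (rule refl)
  show ?thesis
  proof (cases "\<exists>m. PT G m")
    case True
    then have T: "TorLen G = enat (LEAST m. PT G m)" unfolding TL by (rule if_P)
    obtain m0 where m0: "PT G m0" using True by blast
    have L: "PT G (LEAST m. PT G m)" by (rule LeastI[of "PT G", OF m0])
    show ?thesis unfolding T
    proof
      assume "enat (LEAST m. PT G m) \<le> enat n"
      then have "(LEAST m. PT G m) \<le> n" by (simp only: enat_ord_simps)
      then show "PT G n" by (rule PT_up[OF G L])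
    next
      assume "PT G n"
      then have "(LEAST m. PT G m) \<le> n" by (rule Least_le)
      then show "enat (LEAST m. PT G m) \<le> enat n" by (simp only: enat_ord_simps)
    qed
  next
    case False
    then have T: "TorLen G = \<infinity>" unfolding TL by (rule if_not_P)
    have "\<not> (\<infinity> \<le> enat n)" by simp
    then show ?thesis unfolding T using False by blast
  qed
qed


locale fprod =
  fixes I :: "'i set" and A :: "'i \<Rightarrow> ('a, 'b) monoid_scheme"
  assumes grp: "\<And>i. i \<in> I \<Longrightarrow> group (A i)"
begin

abbreviation RW where "RW \<equiv> reduced_word I A"

lemma rw_Nil[simp]: "RW []"
  by (simp add: reduced_word_def)

lemma rw_Cons: "RW ((i,a)#w) \<longleftrightarrow> i \<in> I \<and> a \<in> carrier (A i) \<and> a \<noteq> \<one>\<^bsub>A i\<^esub> \<and> RW w \<and> (w = [] \<or> i \<noteq> fst (hd w))"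
  unfolding reduced_word_def successively_Cons by auto

lemma rw_append: "RW (w @ v) \<longleftrightarrow> RW w \<and> RW v \<and> (w = [] \<or> v = [] \<or> fst (last w) \<noteq> fst (hd v))"
  unfolding reduced_word_def successively_append_iff by auto

lemma rw_tl: "RW (x#w) \<Longrightarrow> RW w"
  by (cases x) (simp add: rw_Cons)

lemma cons_one:
  assumes "RW w" shows "fp_cons A (i, \<one>\<^bsub>A i\<^esub>) w = w"
proof (cases w)
  case (Cons x w')
  obtain j b where x: "x = (j,b)" by (cases x)
  show ?thesis
  proof (cases "i = j")
    case True
    then have "i \<in> I" "b \<in> carrier (A i)" using assms Cons x by (auto simp: rw_Cons)
    then have "\<one>\<^bsub>A i\<^esub> \<otimes>\<^bsub>A i\<^esub> b = b" using grp by (simp add: group.is_monoid monoid.l_one)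
    then show ?thesis using Cons x True assms by (auto simp: rw_Cons Let_def)
  next
    case False then show ?thesis using Cons x by simp
  qed
qed simp

lemma cons_closed:
  assumes "RW w" "i \<in> I" "a \<in> carrier (A i)" shows "RW (fp_cons A (i,a) w)"
proof (cases w)
  case Nil then show ?thesis using assms by (simp add: rw_Cons)
next
  case (Cons x w')
  obtain j b where x: "x = (j,b)" by (cases x)
  show ?thesis
  proof (cases "i = j")
    case True
    then have "b \<in> carrier (A i)" "RW w'" "w' = [] \<or> i \<noteq> fst (hd w')" using assms Cons x by (auto simp: rw_Cons)
    moreover have "a \<otimes>\<^bsub>A i\<^esub> b \<in> carrier (A i)" using grp assms \<open>b \<in> carrier (A i)\<close> by (simp add: group.is_monoid monoid.m_closed)
    ultimately show ?thesis using Cons x True assms by (auto simp: rw_Cons Let_def)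
  next
    case False then show ?thesis using Cons x assms by (auto simp: rw_Cons)
  qed
qed

lemma cons_Cons: "RW (x#w) \<Longrightarrow> fp_cons A x w = x # w"
proof -
  assume r: "RW (x#w)"
  obtain i a where x: "x = (i,a)" by (cases x)
  show ?thesis
  proof (cases w)
    case Nil then show ?thesis using r x by (simp add: rw_Cons)
  next
    case (Cons y w')
    obtain j b where y: "y = (j,b)" by (cases y)
    show ?thesis using r x Cons y by (simp add: rw_Cons)
  qed
qed

lemma cons_cons:
  assumes w: "RW w" and i: "i \<in> I" and a: "a \<in> carrier (A i)" and b: "b \<in> carrier (A i)"
  shows "fp_cons A (i,a) (fp_cons A (i,b) w) = fp_cons A (i, a \<otimes>\<^bsub>A i\<^esub> b) w"
proof -
  interpret G: group "A i" using grp i by blast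
  show ?thesis
  proof (cases w)
    case Nil then show ?thesis using a b by (auto simp: Let_def)
  next
    case (Cons x w')
    obtain j c where x: "x = (j,c)" by (cases x)
    show ?thesis
    proof (cases "i = j")
      case True
      then have c: "c \<in> carrier (A i)" and w': "RW w'" "w' = [] \<or> i \<noteq> fst (hd w')"
        using w Cons x by (auto simp: rw_Cons)
      show ?thesis
      proof (cases "b \<otimes>\<^bsub>A i\<^esub> c = \<one>\<^bsub>A i\<^esub>")
        case True
        then have e: "a \<otimes>\<^bsub>A i\<^esub> b \<otimes>\<^bsub>A i\<^esub> c = a" using a b c by (simp add: G.m_assoc)
        show ?thesis
        proof (cases w')
          case Nil then show ?thesis using Cons x \<open>i = j\<close> True e by (simp add: Let_def)
        next
          case (Cons y w'')
          obtain k d where y: "y = (k,d)" by (cases y)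
          have "k \<noteq> i" using w' Cons y by auto
          then show ?thesis using \<open>w = x # w'\<close> x \<open>i = j\<close> True e Cons y by (simp add: Let_def)
        qed
      next
        case False
        have e: "a \<otimes>\<^bsub>A i\<^esub> b \<otimes>\<^bsub>A i\<^esub> c = a \<otimes>\<^bsub>A i\<^esub> (b \<otimes>\<^bsub>A i\<^esub> c)" using a b c by (simp add: G.m_assoc)
        show ?thesis using Cons x \<open>i = j\<close> False e by (simp add: Let_def)
      qed
    next
      case False
      show ?thesis
      proof (cases "b = \<one>\<^bsub>A i\<^esub>")
        case True then show ?thesis using Cons x False a by (simp add: Let_def)
      next
        case bne: False then show ?thesis using Cons x False a by (simp add: Let_def)
      qed
    qed
  qed
qed

lemma mult_Nil[simp]: "fp_mult A [] v = v" by (simp add: fp_mult_def)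
lemma mult_Cons[simp]: "fp_mult A (x#w) v = fp_cons A x (fp_mult A w v)" by (simp add: fp_mult_def)

lemma mult_closed: "RW w \<Longrightarrow> RW v \<Longrightarrow> RW (fp_mult A w v)"
proof (induction w)
  case (Cons x w)
  obtain i a where x: "x = (i,a)" by (cases x)
  then have "i \<in> I" "a \<in> carrier (A i)" "RW w" using Cons.prems by (auto simp: rw_Cons)
  then show ?case using Cons x by (simp add: cons_closed)
qed simp

lemma mult_cons_left:
  assumes v: "RW v" and u: "RW u" and i: "i \<in> I" and a: "a \<in> carrier (A i)"
  shows "fp_mult A (fp_cons A (i,a) v) u = fp_cons A (i,a) (fp_mult A v u)"
proof -
  interpret G: group "A i" using grp i by blast
  show ?thesis
  proof (cases v)
    case Nil then show ?thesis using u by (simp add: cons_one)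
  next
    case (Cons x v')
    obtain j b where x: "x = (j,b)" by (cases x)
    have v': "RW v'" using v Cons rw_tl by blast
    have mv': "RW (fp_mult A v' u)" using mult_closed v' u by blast
    show ?thesis
    proof (cases "i = j")
      case True
      then have b: "b \<in> carrier (A i)" using v Cons x by (simp add: rw_Cons)
      have cc: "fp_cons A (i,a) (fp_cons A (i,b) (fp_mult A v' u)) = fp_cons A (i, a \<otimes>\<^bsub>A i\<^esub> b) (fp_mult A v' u)"
        by (rule cons_cons[OF mv' i a b])
      show ?thesis
      proof (cases "a \<otimes>\<^bsub>A i\<^esub> b = \<one>\<^bsub>A i\<^esub>")
        case True
        then show ?thesis using Cons x \<open>i = j\<close> cc cons_one[OF mv', of i] by (simp add: Let_def)
      next
        case False
        then show ?thesis using Cons x \<open>i = j\<close> cc by (simp add: Let_def)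
      qed
    next
      case False
      show ?thesis
      proof (cases "a = \<one>\<^bsub>A i\<^esub>")
        case True
        have "RW (fp_mult A v u)" using mult_closed v u by blast
        then show ?thesis using Cons x False True cons_one by simp
      next
        case False
        then show ?thesis using Cons x \<open>i \<noteq> j\<close> by simp
      qed
    qed
  qed
qed

lemma mult_assoc:
  "RW w \<Longrightarrow> RW v \<Longrightarrow> RW u \<Longrightarrow> fp_mult A (fp_mult A w v) u = fp_mult A w (fp_mult A v u)"
proof (induction w)
  case (Cons x w)
  obtain i a where x: "x = (i,a)" by (cases x)
  then have ia: "i \<in> I" "a \<in> carrier (A i)" and w: "RW w" using Cons.prems by (auto simp: rw_Cons)
  have "fp_mult A (fp_mult A (x#w) v) u = fp_mult A (fp_cons A (i,a) (fp_mult A w v)) u" using x by simp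
  also have "\<dots> = fp_cons A (i,a) (fp_mult A (fp_mult A w v) u)"
    by (rule mult_cons_left[OF mult_closed[OF w Cons.prems(2)] Cons.prems(3) ia])
  also have "\<dots> = fp_mult A (x#w) (fp_mult A v u)" using Cons.IH[OF w Cons.prems(2,3)] x by simp
  finally show ?case .
qed simp

lemma l_inv_ex: "RW w \<Longrightarrow> \<exists>y. RW y \<and> fp_mult A y w = []"
proof (induction w)
  case Nil then show ?case by (intro exI[of _ "[]"]) simp
next
  case (Cons x w)
  obtain i a where x: "x = (i,a)" by (cases x)
  then have ia: "i \<in> I" "a \<in> carrier (A i)" and w: "RW w" using Cons.prems by (auto simp: rw_Cons)
  interpret G: group "A i" using grp ia by blast
  obtain y where y: "RW y" "fp_mult A y w = []" using Cons.IH w by blast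
  let ?z = "fp_cons A (i, inv\<^bsub>A i\<^esub> a) []"
  have z: "RW ?z" using ia by (intro cons_closed) auto
  have "fp_mult A (fp_mult A y ?z) (x#w) = fp_mult A y (fp_mult A ?z (x#w))"
    using mult_assoc y z Cons.prems by blast
  also have "fp_mult A ?z (x#w) = fp_cons A (i, inv\<^bsub>A i\<^esub> a) (x#w)"
    using mult_cons_left[of "[]" "x#w" i "inv\<^bsub>A i\<^esub> a"] Cons.prems ia by simp
  also have "\<dots> = w" using x ia by (simp add: Let_def)
  finally have "fp_mult A (fp_mult A y ?z) (x#w) = []" using y by simp
  moreover have "RW (fp_mult A y ?z)" using mult_closed y z by blast
  ultimately show ?case by blast
qed

abbreviation F where "F \<equiv> free_product I A"

lemma F_carrier[simp]: "carrier F = {w. RW w}"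
  and F_mult[simp]: "w \<otimes>\<^bsub>F\<^esub> v = fp_mult A w v"
  and F_one[simp]: "\<one>\<^bsub>F\<^esub> = []"
  by (simp_all add: free_product_def)

lemma group_F: "group F"
  by (rule groupI) (auto simp: mult_closed mult_assoc l_inv_ex)

end


lemma (in group) grp_cancel1: "x \<in> carrier G \<Longrightarrow> y \<in> carrier G \<Longrightarrow> x \<otimes> (inv x \<otimes> y) = y"
  by (simp add: m_assoc[symmetric])

lemma (in group) grp_cancel2: "x \<in> carrier G \<Longrightarrow> y \<in> carrier G \<Longrightarrow> inv x \<otimes> (x \<otimes> y) = y"
  by (simp add: m_assoc[symmetric])

lemma conj_pow:
  fixes G (structure)
  assumes "group G" "g \<in> carrier G" "w \<in> carrier G"
  shows "(inv g \<otimes> w \<otimes> g) [^] (k::nat) = inv g \<otimes> w [^] k \<otimes> g"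
proof -
  interpret group G by fact
  show ?thesis
  proof (induction k)
    case 0 then show ?case using assms by simp
  next
    case (Suc k)
    have "(inv g \<otimes> w \<otimes> g) [^] Suc k = (inv g \<otimes> w [^] k \<otimes> g) \<otimes> (inv g \<otimes> w \<otimes> g)"
      using Suc by simp
    also have "\<dots> = inv g \<otimes> w [^] Suc k \<otimes> g"
      using assms by (simp add: m_assoc grp_cancel1)
    finally show ?case .
  qed
qed

context fprod
begin

definition ins :: "'i \<Rightarrow> 'a \<Rightarrow> ('i \<times> 'a) list" where
  "ins i a = fp_cons A (i,a) []"

lemma ins_closed: "i \<in> I \<Longrightarrow> a \<in> carrier (A i) \<Longrightarrow> RW (ins i a)"
  unfolding ins_def by (rule cons_closed) auto

lemma mult_ins: "RW v \<Longrightarrow> i \<in> I \<Longrightarrow> a \<in> carrier (A i) \<Longrightarrow> fp_mult A (ins i a) v = fp_cons A (i,a) v"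
  unfolding ins_def using mult_cons_left[of "[]" v i a] by simp

lemma ins_hom: "i \<in> I \<Longrightarrow> ins i \<in> hom (A i) F"
proof -
  assume i: "i \<in> I"
  interpret G: group "A i" using grp i by blast
  show ?thesis
  proof (rule homI)
    fix a assume "a \<in> carrier (A i)" then show "ins i a \<in> carrier F" using ins_closed i by simp
  next
    fix a b assume a: "a \<in> carrier (A i)" and b: "b \<in> carrier (A i)"
    have "ins i (a \<otimes>\<^bsub>A i\<^esub> b) = fp_cons A (i,a) (fp_cons A (i,b) [])"
      unfolding ins_def using cons_cons[of "[]" i a b] i a b by simp
    also have "\<dots> = fp_mult A (ins i a) (ins i b)"
      using mult_ins[OF ins_closed[OF i b] i a] by (simp add: ins_def)
    finally show "ins i (a \<otimes>\<^bsub>A i\<^esub> b) = ins i a \<otimes>\<^bsub>F\<^esub> ins i b" by simp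
  qed
qed

lemma ins_eq_Nil: "ins i a = [] \<longleftrightarrow> a = \<one>\<^bsub>A i\<^esub>"
  unfolding ins_def by simp

lemma ins_ne: "a \<noteq> \<one>\<^bsub>A i\<^esub> \<Longrightarrow> ins i a = [(i,a)]"
  unfolding ins_def by simp

lemma Cons_eq_ins: "RW ((i,a)#w) \<Longrightarrow> (i,a)#w = ins i a \<otimes>\<^bsub>F\<^esub> w"
proof -
  assume r: "RW ((i,a)#w)"
  then have "i \<in> I" "a \<in> carrier (A i)" "RW w" by (auto simp: rw_Cons)
  then show ?thesis using mult_ins cons_Cons[OF r] by simp
qed

lemma cons_length: "length (fp_cons A x w) \<le> Suc (length w)"
  by (induction A x w rule: fp_cons.induct) (auto simp: Let_def)

lemma mult_length: "length (fp_mult A w v) \<le> length w + length v"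
proof (induction w)
  case (Cons x w)
  then show ?case using cons_length[of x "fp_mult A w v"] by simp
qed simp

lemma mult_append_eq: "RW (w @ v) \<Longrightarrow> fp_mult A w v = w @ v"
proof (induction w)
  case (Cons x w)
  have "RW (w @ v)" using Cons.prems rw_tl by (metis append_Cons)
  then show ?case using Cons cons_Cons by simp
qed simp

lemma mult_app: "fp_mult A (w @ v) u = fp_mult A w (fp_mult A v u)"
  by (simp add: fp_mult_def)

lemma cyc_pow:
  assumes w: "RW w" "w \<noteq> []" "fst (hd w) \<noteq> fst (last w)"
  shows "w [^]\<^bsub>F\<^esub> (Suc k) = concat (replicate (Suc k) w) \<and> RW (concat (replicate (Suc k) w))"
proof (induction k)
  interpret F: group F by (rule group_F)
  case 0 then show ?case using w by simp
next
  interpret F: group F by (rule group_F)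
  case (Suc k)
  let ?c = "concat (replicate (Suc k) w)"
  have hd: "hd ?c = hd w" using w by simp
  have r: "RW (w @ ?c)" using Suc w hd by (auto simp: rw_append)
  have "w [^]\<^bsub>F\<^esub> Suc (Suc k) = w \<otimes>\<^bsub>F\<^esub> w [^]\<^bsub>F\<^esub> Suc k"
    using w by (intro F.nat_pow_Suc2) simp
  also have "\<dots> = w @ ?c" using Suc mult_append_eq[OF r] by simp
  finally show ?case using r by simp
qed

end


context fprod
begin

definition ext :: "('c, 'd) monoid_scheme \<Rightarrow> ('i \<Rightarrow> 'a \<Rightarrow> 'c) \<Rightarrow> ('i \<times> 'a) list \<Rightarrow> 'c" where
  "ext H f w = foldr (\<lambda>x acc. f (fst x) (snd x) \<otimes>\<^bsub>H\<^esub> acc) w \<one>\<^bsub>H\<^esub>"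

lemma ext_Nil[simp]: "ext H f [] = \<one>\<^bsub>H\<^esub>" by (simp add: ext_def)
lemma ext_Cons[simp]: "ext H f ((i,a)#w) = f i a \<otimes>\<^bsub>H\<^esub> ext H f w" by (simp add: ext_def)

context
  fixes H :: "('c, 'd) monoid_scheme" and f :: "'i \<Rightarrow> 'a \<Rightarrow> 'c"
  assumes H: "group H" and f: "\<And>i. i \<in> I \<Longrightarrow> f i \<in> hom (A i) H"
begin

lemma ext_closed: "RW w \<Longrightarrow> ext H f w \<in> carrier H"
proof (induction w)
  case Nil then show ?case using H by (simp add: group.is_monoid monoid.one_closed)
next
  case (Cons x w)
  obtain i a where x: "x = (i,a)" by (cases x)
  then have "i \<in> I" "a \<in> carrier (A i)" "RW w" using Cons.prems by (auto simp: rw_Cons)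
  moreover have "f i a \<in> carrier H" using f \<open>i \<in> I\<close> \<open>a \<in> carrier (A i)\<close> unfolding hom_def by blast
  ultimately show ?case using Cons x by (simp add: monoid.m_closed[OF group.is_monoid[OF H]])
qed

lemma ext_cons:
  assumes w: "RW w" and i: "i \<in> I" and a: "a \<in> carrier (A i)"
  shows "ext H f (fp_cons A (i,a) w) = f i a \<otimes>\<^bsub>H\<^esub> ext H f w"
proof -
  interpret G: group "A i" using grp i by blast
  interpret H: group H by (rule H)
  interpret h: group_hom "A i" H "f i" using f i by (unfold_locales) auto
  have ew: "ext H f w \<in> carrier H" by (rule ext_closed[OF w])
  have fa: "f i a \<in> carrier H" using a by simp
  show ?thesis
  proof (cases w)
    case Nil then show ?thesis using a by (auto simp: Let_def)
  next
    case (Cons x w')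
    obtain j b where x: "x = (j,b)" by (cases x)
    show ?thesis
    proof (cases "i = j")
      case True
      then have x2: "w = (i,b)#w'" using Cons x by simp
      then have b: "b \<in> carrier (A i)" and w': "RW w'" using w by (auto simp: rw_Cons)
      have ew': "ext H f w' \<in> carrier H" by (rule ext_closed[OF w'])
      have fb: "f i b \<in> carrier H" using b by simp
      have e: "f i a \<otimes>\<^bsub>H\<^esub> ext H f w = f i (a \<otimes>\<^bsub>A i\<^esub> b) \<otimes>\<^bsub>H\<^esub> ext H f w'"
        using x2 a b fa fb ew' by (simp add: H.m_assoc)
      show ?thesis
      proof (cases "a \<otimes>\<^bsub>A i\<^esub> b = \<one>\<^bsub>A i\<^esub>")
        case True then show ?thesis using e x2 ew' by (simp add: Let_def)
      next
        case False then show ?thesis using e x2 by (simp add: Let_def)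
      qed
    next
      case False
      then show ?thesis using Cons x ew by (auto simp: Let_def)
    qed
  qed
qed

lemma ext_mult: "RW w \<Longrightarrow> RW v \<Longrightarrow> ext H f (fp_mult A w v) = ext H f w \<otimes>\<^bsub>H\<^esub> ext H f v"
proof (induction w)
  case Nil then show ?case using H ext_closed by (simp add: group.is_monoid monoid.l_one)
next
  case (Cons x w)
  obtain i a where x: "x = (i,a)" by (cases x)
  then have ia: "i \<in> I" "a \<in> carrier (A i)" and w: "RW w" using Cons.prems by (auto simp: rw_Cons)
  have fa: "f i a \<in> carrier H" using f ia by (auto simp: hom_def)
  have "ext H f (fp_mult A (x#w) v) = f i a \<otimes>\<^bsub>H\<^esub> ext H f (fp_mult A w v)"
    using x ext_cons[OF mult_closed[OF w Cons.prems(2)] ia] by simp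
  also have "\<dots> = f i a \<otimes>\<^bsub>H\<^esub> (ext H f w \<otimes>\<^bsub>H\<^esub> ext H f v)" using Cons.IH[OF w Cons.prems(2)] by simp
  also have "\<dots> = ext H f (x#w) \<otimes>\<^bsub>H\<^esub> ext H f v"
    using x fa ext_closed[OF w] ext_closed[OF Cons.prems(2)] H by (simp add: group.is_monoid monoid.m_assoc)
  finally show ?case .
qed

lemma ext_hom: "ext H f \<in> hom F H"
  by (rule homI) (auto simp: ext_closed ext_mult)

lemma ext_ins: "i \<in> I \<Longrightarrow> a \<in> carrier (A i) \<Longrightarrow> ext H f (ins i a) = f i a"
proof -
  assume ia: "i \<in> I" "a \<in> carrier (A i)"
  have "f i a \<in> carrier H" using f ia unfolding hom_def by blast
  then show ?thesis unfolding ins_def using ext_cons[of "[]" i a] ia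
    by (simp add: monoid.r_one[OF group.is_monoid[OF H]])
qed

end

lemma torsion:
  fixes k :: nat
  assumes "RW w" "k > 0" "w [^]\<^bsub>F\<^esub> k = []"
  shows "w = [] \<or> (\<exists>u i a. RW u \<and> i \<in> I \<and> a \<in> carrier (A i) \<and> a [^]\<^bsub>A i\<^esub> k = \<one>\<^bsub>A i\<^esub> \<and>
            w = u \<otimes>\<^bsub>F\<^esub> ins i a \<otimes>\<^bsub>F\<^esub> inv\<^bsub>F\<^esub> u)"
  using assms
proof (induction "length w" arbitrary: w rule: less_induct)
  case less
  interpret F: group F by (rule group_F)
  note w = less.prems(1)
  show ?case
  proof (cases w)
    case Nil then show ?thesis by simp
  next
    case (Cons x r)
    obtain i a where x: "x = (i,a)" by (cases x)
    have ia: "i \<in> I" "a \<in> carrier (A i)" "a \<noteq> \<one>\<^bsub>A i\<^esub>" and r: "RW r"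
      using w Cons x by (auto simp: rw_Cons)
    interpret G: group "A i" using grp ia by blast
    interpret h: group_hom "A i" F "ins i" using ins_hom[OF ia(1)] by unfold_locales
    show ?thesis
    proof (cases r)
      case Nil
      have we: "w = ins i a" using Cons Nil x ia ins_ne by simp
      have "ins i (a [^]\<^bsub>A i\<^esub> k) = ins i a [^]\<^bsub>F\<^esub> k" by (rule h.hom_nat_pow[OF ia(2)])
      also have "\<dots> = []" using less.prems(3) we by simp
      finally have "ins i (a [^]\<^bsub>A i\<^esub> k) = []" .
      then have ak: "a [^]\<^bsub>A i\<^esub> k = \<one>\<^bsub>A i\<^esub>" by (simp add: ins_eq_Nil)
      have "w = [] \<otimes>\<^bsub>F\<^esub> ins i a \<otimes>\<^bsub>F\<^esub> inv\<^bsub>F\<^esub> []"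
        using we ins_closed[OF ia(1,2)] F.inv_one F.r_one by simp
      moreover have "RW []" by simp
      ultimately show ?thesis using ia ak by blast
    next
      case (Cons y r')
      obtain j b where lw: "last w = (j,b)" by (cases "last w")
      show ?thesis
      proof (cases "i = j")
        case False
        have "fst (hd w) \<noteq> fst (last w)" using False lw \<open>w = x # r\<close> x by simp
        then have "w [^]\<^bsub>F\<^esub> k = concat (replicate k w)"
          using cyc_pow[OF w] \<open>w = x # r\<close> less.prems(2) by (metis Suc_pred list.distinct(1))
        then have "w [^]\<^bsub>F\<^esub> k \<noteq> []" using \<open>w = x # r\<close> less.prems(2) by simp
        then show ?thesis using less.prems(3) by blast
      next
        case True
        define m where "m = butlast r"
        have lr: "last r = (i,b)" using lw True \<open>r = y # r'\<close> \<open>w = x # r\<close> by simp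
        have rm: "r = m @ [(i,b)]" unfolding m_def using lr \<open>r = y # r'\<close>
          by (metis append_butlast_last_id list.distinct(1))
        have rb: "RW [(i,b)]" and mr: "RW m" using r rm by (auto simp: rw_append)
        then have b: "b \<in> carrier (A i)" by (simp add: rw_Cons)
        let ?g = "ins i a"
        have g: "?g \<in> carrier F" using ins_closed ia by simp
        have ginv: "inv\<^bsub>F\<^esub> ?g = ins i (inv\<^bsub>A i\<^esub> a)" using h.hom_inv ia by simp
        let ?w' = "inv\<^bsub>F\<^esub> ?g \<otimes>\<^bsub>F\<^esub> w \<otimes>\<^bsub>F\<^esub> ?g"
        have wx: "w = (i,a)#r" using \<open>w = x # r\<close> x by simp
        have "inv\<^bsub>F\<^esub> ?g \<otimes>\<^bsub>F\<^esub> w = fp_mult A (ins i (inv\<^bsub>A i\<^esub> a)) ((i,a)#r)"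
          unfolding ginv wx by simp
        also have "\<dots> = fp_cons A (i, inv\<^bsub>A i\<^esub> a) ((i,a)#r)"
          using w wx ia by (intro mult_ins) auto
        also have "\<dots> = r" using ia by (simp add: Let_def)
        finally have "?w' = fp_mult A r ?g" by simp
        also have "\<dots> = fp_mult A m (fp_cons A (i,b) (fp_cons A (i,a) []))"
          unfolding rm mult_app by (simp add: ins_def)
        also have "\<dots> = fp_mult A m (fp_cons A (i, b \<otimes>\<^bsub>A i\<^esub> a) [])"
          using cons_cons[of "[]" i b a] ia b by simp
        finally have w'e: "?w' = fp_mult A m (fp_cons A (i, b \<otimes>\<^bsub>A i\<^esub> a) [])" .
        have l1: "length ?w' \<le> length m + length (fp_cons A (i, b \<otimes>\<^bsub>A i\<^esub> a) [])"
          unfolding w'e by (rule mult_length)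
        have l2: "length (fp_cons A (i, b \<otimes>\<^bsub>A i\<^esub> a) []) \<le> 1"
          using cons_length[of "(i, b \<otimes>\<^bsub>A i\<^esub> a)" "[]"] by simp
        have "length ?w' \<le> length m + 1" using l1 l2 by linarith
        moreover have "length w = length m + 2" using \<open>w = x # r\<close> rm by simp
        ultimately have len: "length ?w' < length w" by simp
        have wc: "w \<in> carrier F" using w by simp
        have w'c: "?w' \<in> carrier F" by (intro F.m_closed F.inv_closed g wc)
        have "?w' [^]\<^bsub>F\<^esub> k = inv\<^bsub>F\<^esub> ?g \<otimes>\<^bsub>F\<^esub> w [^]\<^bsub>F\<^esub> k \<otimes>\<^bsub>F\<^esub> ?g"
          using conj_pow[OF group_F g] w by simp
        also have "\<dots> = \<one>\<^bsub>F\<^esub>"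
        proof -
          have "w [^]\<^bsub>F\<^esub> k = \<one>\<^bsub>F\<^esub>" using less.prems(3) by simp
          then show ?thesis using g by (simp del: F_mult F_one F_carrier)
        qed
        finally have w'k: "?w' [^]\<^bsub>F\<^esub> k = []" by simp
        have winv: "w = ?g \<otimes>\<^bsub>F\<^esub> ?w' \<otimes>\<^bsub>F\<^esub> inv\<^bsub>F\<^esub> ?g"
          using g wc by (simp del: F_mult F_one F_carrier add: F.m_assoc F.grp_cancel1)
        have IH: "?w' = [] \<or> (\<exists>u i a. RW u \<and> i \<in> I \<and> a \<in> carrier (A i) \<and> a [^]\<^bsub>A i\<^esub> k = \<one>\<^bsub>A i\<^esub> \<and>
            ?w' = u \<otimes>\<^bsub>F\<^esub> ins i a \<otimes>\<^bsub>F\<^esub> inv\<^bsub>F\<^esub> u)"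
          using less.hyps[OF len] w'c less.prems(2) w'k by simp
        show ?thesis
        proof (cases "?w' = []")
          case True
          then have e1: "?w' = \<one>\<^bsub>F\<^esub>" by simp
          have "w = ?g \<otimes>\<^bsub>F\<^esub> \<one>\<^bsub>F\<^esub> \<otimes>\<^bsub>F\<^esub> inv\<^bsub>F\<^esub> ?g" using winv unfolding e1 .
          then have "w = \<one>\<^bsub>F\<^esub>" using g by (simp del: F_mult F_one F_carrier)
          then have "w = []" by simp
          then show ?thesis by simp
        next
          case False
          then obtain u i' c where u: "RW u" "i' \<in> I" "c \<in> carrier (A i')" "c [^]\<^bsub>A i'\<^esub> k = \<one>\<^bsub>A i'\<^esub>"
            and ue: "?w' = u \<otimes>\<^bsub>F\<^esub> ins i' c \<otimes>\<^bsub>F\<^esub> inv\<^bsub>F\<^esub> u" using IH by blast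
          have uc: "u \<in> carrier F" using u by simp
          have ic: "ins i' c \<in> carrier F" using ins_closed u by simp
          have "w = (?g \<otimes>\<^bsub>F\<^esub> u) \<otimes>\<^bsub>F\<^esub> ins i' c \<otimes>\<^bsub>F\<^esub> inv\<^bsub>F\<^esub> (?g \<otimes>\<^bsub>F\<^esub> u)"
            using winv ue g uc ic by (simp del: F_mult F_one F_carrier add: F.m_assoc F.inv_mult_group)
          moreover have "RW (?g \<otimes>\<^bsub>F\<^esub> u)" using g uc by (metis F.m_closed F_carrier mem_Collect_eq)
          ultimately show ?thesis using u by blast
        qed
      qed
    qed
  qed
qed

end


locale fhom = A: fprod I A + B: fprod I B
  for I :: "'i set" and A :: "'i \<Rightarrow> ('a, 'b) monoid_scheme" and B :: "'i \<Rightarrow> ('c, 'd) monoid_scheme" +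
  fixes h :: "'i \<Rightarrow> 'a \<Rightarrow> 'c"
  assumes h_hom: "\<And>i. i \<in> I \<Longrightarrow> h i \<in> hom (A i) (B i)"
    and h_surj: "\<And>i. i \<in> I \<Longrightarrow> h i ` carrier (A i) = carrier (B i)"
begin

definition phi where "phi = A.ext B.F (\<lambda>i a. B.ins i (h i a))"

lemma f_hom: "i \<in> I \<Longrightarrow> (\<lambda>a. B.ins i (h i a)) \<in> hom (A i) B.F"
  using hom_compose[OF h_hom B.ins_hom] by (simp add: comp_def)

lemma phi_hom: "phi \<in> hom A.F B.F"
  unfolding phi_def by (rule A.ext_hom[OF B.group_F f_hom])

lemma phi_group_hom: "group_hom A.F B.F phi"
  unfolding group_hom_def group_hom_axioms_def using A.group_F B.group_F phi_hom by blast

lemma phi_ins: "i \<in> I \<Longrightarrow> a \<in> carrier (A i) \<Longrightarrow> phi (A.ins i a) = B.ins i (h i a)"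
  unfolding phi_def by (rule A.ext_ins[OF B.group_F f_hom])

lemma phi_Cons: "phi ((i,a)#w) = B.ins i (h i a) \<otimes>\<^bsub>B.F\<^esub> phi w"
  unfolding phi_def by simp

lemma phi_surj: "B.RW v \<Longrightarrow> \<exists>w. A.RW w \<and> phi w = v"
proof -
  interpret F: group A.F by (rule A.group_F)
  show "B.RW v \<Longrightarrow> \<exists>w. A.RW w \<and> phi w = v"
proof (induction v)
  case Nil then show ?case by (intro exI[of _ "[]"]) (simp add: phi_def)
next
  case (Cons y v)
  obtain i b where y: "y = (i,b)" by (cases y)
  have ib: "i \<in> I" "b \<in> carrier (B i)" and v: "B.RW v" using Cons.prems y by (auto simp: B.rw_Cons)
  obtain w where w: "A.RW w" "phi w = v" using Cons.IH v by blast
  have "b \<in> h i ` carrier (A i)" using h_surj[OF ib(1)] ib(2) by simp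
  then obtain a where a: "a \<in> carrier (A i)" "h i a = b" by (elim imageE) simp
  interpret p: group_hom A.F B.F phi by (rule phi_group_hom)
  have ic: "A.ins i a \<in> carrier A.F" using A.ins_closed[OF ib(1) a(1)] by simp
  have wc: "w \<in> carrier A.F" using w(1) by simp
  have c: "fp_mult A (A.ins i a) w \<in> carrier A.F"
    using F.m_closed[OF ic wc] by simp
  have "phi (A.ins i a \<otimes>\<^bsub>A.F\<^esub> w) = phi (A.ins i a) \<otimes>\<^bsub>B.F\<^esub> phi w"
    by (rule p.hom_mult[OF ic wc])
  also have "\<dots> = B.ins i b \<otimes>\<^bsub>B.F\<^esub> v" unfolding phi_ins[OF ib(1) a(1)] a(2) w(2) ..
  also have "\<dots> = (i,b) # v"
    by (rule B.Cons_eq_ins[symmetric]) (use Cons.prems y in simp)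
  finally have "phi (fp_mult A (A.ins i a) w) = y # v" using y by simp
  moreover have "A.RW (fp_mult A (A.ins i a) w)" using c by simp
  ultimately show ?case by (intro exI[of _ "fp_mult A (A.ins i a) w"] conjI)
qed
qed

lemma phi_map:
  "A.RW w \<Longrightarrow> (\<forall>(i,a) \<in> set w. h i a \<noteq> \<one>\<^bsub>B i\<^esub>) \<Longrightarrow>
     phi w = map (\<lambda>(i,a). (i, h i a)) w \<and> B.RW (map (\<lambda>(i,a). (i, h i a)) w)"
proof (induction w)
  case Nil then show ?case by (simp add: phi_def)
next
  case (Cons x w)
  obtain i a where x: "x = (i,a)" by (cases x)
  have ia: "i \<in> I" "a \<in> carrier (A i)" and w: "A.RW w" and hd: "w = [] \<or> i \<noteq> fst (hd w)"
    using Cons.prems x by (auto simp: A.rw_Cons)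
  have ha: "h i a \<in> carrier (B i)" "h i a \<noteq> \<one>\<^bsub>B i\<^esub>" using h_hom[OF ia(1)] ia(2) Cons.prems(2) x
    by (auto simp: hom_def)
  let ?m = "map (\<lambda>(i,a). (i, h i a)) w"
  have IH: "phi w = ?m" "B.RW ?m" using Cons w by auto
  have hd': "?m = [] \<or> i \<noteq> fst (hd ?m)" using hd by (cases w) auto
  have r: "B.RW ((i, h i a) # ?m)" using ia ha IH hd' by (simp add: B.rw_Cons)
  have "phi (x#w) = B.ins i (h i a) \<otimes>\<^bsub>B.F\<^esub> ?m" using x phi_Cons IH by simp
  also have "\<dots> = (i, h i a) # ?m" using B.Cons_eq_ins[OF r] by simp
  finally show ?case using r x by simp
qed

definition KS where "KS = (\<Union>i\<in>I. A.ins i ` {a \<in> carrier (A i). h i a = \<one>\<^bsub>B i\<^esub>})"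

lemma KS_sub: "KS \<subseteq> carrier A.F"
  unfolding KS_def using A.ins_closed by auto

lemma phi_kernel:
  assumes "A.RW w" "phi w = []"
  shows "w \<in> normal_closure A.F KS"
  using assms
proof (induction "length w" arbitrary: w rule: less_induct)
  case less
  interpret F: group A.F by (rule A.group_F)
  interpret p: group_hom A.F B.F phi by (rule phi_group_hom)
  let ?M = "normal_closure A.F KS"
  have M: "?M \<lhd> A.F" by (rule ncl_normal[OF A.group_F KS_sub])
  interpret M: normal ?M A.F by (rule M)
  show ?case
  proof (cases "\<forall>(i,a) \<in> set w. h i a \<noteq> \<one>\<^bsub>B i\<^esub>")
    case True
    then have "phi w = map (\<lambda>(i,a). (i, h i a)) w" using phi_map less.prems(1) by blast
    then have "w = []" using less.prems(2) by simp
    then show ?thesis using M.one_closed by simp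
  next
    case False
    then obtain i a where ia: "(i,a) \<in> set w" "h i a = \<one>\<^bsub>B i\<^esub>" by auto
    obtain p q where w: "w = p @ (i,a) # q" using split_list[OF ia(1)] by blast
    have p: "A.RW p" and iq: "A.RW ((i,a)#q)" using less.prems(1) w by (auto simp: A.rw_append)
    have q: "A.RW q" and ii: "i \<in> I" "a \<in> carrier (A i)" using iq by (auto simp: A.rw_Cons)
    have pc: "p \<in> carrier A.F" and qc: "q \<in> carrier A.F" using p q by simp_all
    have ic: "A.ins i a \<in> carrier A.F" using A.ins_closed ii by simp
    have "w = p \<otimes>\<^bsub>A.F\<^esub> ((i,a)#q)" using A.mult_append_eq less.prems(1) w by simp
    also have "(i,a)#q = A.ins i a \<otimes>\<^bsub>A.F\<^esub> q" by (rule A.Cons_eq_ins[OF iq])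
    finally have we: "w = p \<otimes>\<^bsub>A.F\<^esub> (A.ins i a \<otimes>\<^bsub>A.F\<^esub> q)" .
    let ?c = "p \<otimes>\<^bsub>A.F\<^esub> A.ins i a \<otimes>\<^bsub>A.F\<^esub> inv\<^bsub>A.F\<^esub> p"
    have "A.ins i a \<in> KS" unfolding KS_def using ii ia by blast
    then have "A.ins i a \<in> ?M" using ncl_sub[OF KS_sub A.group_F] by blast
    then have cM: "?c \<in> ?M" using M.inv_op_closed2 pc by blast
    have w2: "w = ?c \<otimes>\<^bsub>A.F\<^esub> (p \<otimes>\<^bsub>A.F\<^esub> q)"
      unfolding we using pc qc ic by (simp del: A.F_mult A.F_carrier add: F.m_assoc F.grp_cancel2)
    have pq: "A.RW (p \<otimes>\<^bsub>A.F\<^esub> q)" using A.mult_closed p q by simp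
    have "length (p \<otimes>\<^bsub>A.F\<^esub> q) \<le> length p + length q" using A.mult_length by simp
    then have len: "length (p \<otimes>\<^bsub>A.F\<^esub> q) < length w" using w by simp
    have phins: "phi (A.ins i a) = \<one>\<^bsub>B.F\<^esub>" using phi_ins[OF ii] ia(2) B.ins_eq_Nil by simp
    have "phi w = phi p \<otimes>\<^bsub>B.F\<^esub> (phi (A.ins i a) \<otimes>\<^bsub>B.F\<^esub> phi q)"
      unfolding we using pc qc ic by (simp del: A.F_mult A.F_carrier B.F_mult B.F_carrier B.F_one)
    also have "\<dots> = phi (p \<otimes>\<^bsub>A.F\<^esub> q)"
      unfolding phins using pc qc by (simp del: A.F_mult A.F_carrier B.F_mult B.F_carrier B.F_one)
    finally have "phi (p \<otimes>\<^bsub>A.F\<^esub> q) = []" using less.prems(2) by simp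
    then have "p \<otimes>\<^bsub>A.F\<^esub> q \<in> ?M" using less.hyps[OF len] pq by blast
    then show ?thesis using w2 cM M.m_closed by simp
  qed
qed

end


lemma vimage_normal:
  assumes G: "group G" and H: "group H" and f: "f \<in> hom G H" and N: "N \<lhd> H"
  shows "{x \<in> carrier G. f x \<in> N} \<lhd> G"
proof -
  interpret G: group G by (rule G)
  interpret H: group H by (rule H)
  interpret f: group_hom G H f unfolding group_hom_def group_hom_axioms_def using G H f by blast
  interpret N: normal N H by (rule N)
  have sg: "subgroup {x \<in> carrier G. f x \<in> N} G"
  proof (rule G.subgroupI)
    have "\<one>\<^bsub>G\<^esub> \<in> {x \<in> carrier G. f x \<in> N}" using N.one_closed by simp
    then show "{x \<in> carrier G. f x \<in> N} \<noteq> {}" by blast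
  next
    fix a assume "a \<in> {x \<in> carrier G. f x \<in> N}"
    then show "inv\<^bsub>G\<^esub> a \<in> {x \<in> carrier G. f x \<in> N}" using N.m_inv_closed by auto
  next
    fix a b assume "a \<in> {x \<in> carrier G. f x \<in> N}" "b \<in> {x \<in> carrier G. f x \<in> N}"
    then show "a \<otimes>\<^bsub>G\<^esub> b \<in> {x \<in> carrier G. f x \<in> N}" using N.m_closed by auto
  qed auto
  show ?thesis
  proof (rule G.normal_invI[OF sg])
    fix x h assume "x \<in> carrier G" "h \<in> {x \<in> carrier G. f x \<in> N}"
    then show "x \<otimes>\<^bsub>G\<^esub> h \<otimes>\<^bsub>G\<^esub> inv\<^bsub>G\<^esub> x \<in> {x \<in> carrier G. f x \<in> N}"
      using N.inv_op_closed2 by auto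
  qed
qed

lemma TorS_sub: "TorS G N \<subseteq> carrier G"
  unfolding TorS_def by blast

lemma hom_Tor:
  assumes G: "group G" and H: "group H" and f: "f \<in> hom G H"
  shows "f ` Tor G n \<subseteq> Tor H n"
proof (induction n)
  case 0
  interpret f: group_hom G H f unfolding group_hom_def group_hom_axioms_def using G H f by blast
  show ?case by simp
next
  case (Suc n)
  interpret G: group G by (rule G)
  interpret H: group H by (rule H)
  interpret f: group_hom G H f unfolding group_hom_def group_hom_axioms_def using G H f by blast
  let ?P = "{x \<in> carrier G. f x \<in> Tor H (Suc n)}"
  have P: "?P \<lhd> G" by (rule vimage_normal[OF G H f Tor_normal[OF H]])
  have "TorS G (Tor G n) \<subseteq> ?P"
  proof
    fix g assume "g \<in> TorS G (Tor G n)"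
    then obtain k :: nat where g: "g \<in> carrier G" "k > 0" "g [^]\<^bsub>G\<^esub> k \<in> Tor G n" unfolding TorS_def by blast
    have "f g [^]\<^bsub>H\<^esub> k = f (g [^]\<^bsub>G\<^esub> k)" by (rule f.hom_nat_pow[OF g(1), symmetric])
    also have "\<dots> \<in> Tor H n" using Suc g by blast
    finally have fk: "f g [^]\<^bsub>H\<^esub> k \<in> Tor H n" .
    have fgc: "f g \<in> carrier H" using g by simp
    have "f g \<in> TorS H (Tor H n)" unfolding TorS_def using fgc g(2) fk by blast
    then have "f g \<in> Tor H (Suc n)" unfolding Tor_Suc[OF H] using ncl_sub[OF TorS_sub H] by blast
    then show "g \<in> ?P" using g by simp
  qed
  then have "Tor G (Suc n) \<subseteq> ?P" unfolding Tor_Suc[OF G] by (rule ncl_least[OF P])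
  then show ?case by blast
qed

lemma enat_eq_by_le:
  fixes x y :: enat
  assumes "\<And>n. x \<le> enat n \<longleftrightarrow> y \<le> enat n"
  shows "x = y"
proof (cases x)
  case (enat a)
  then have "y \<le> enat a" using assms[of a] by simp
  then obtain b where b: "y = enat b" "b \<le> a" by (cases y) auto
  then have "x \<le> enat b" using assms[of b] by simp
  then show ?thesis using enat b by simp
next
  case infinity
  show ?thesis
  proof (cases y)
    case (enat b)
    then have "x \<le> enat b" using assms[of b] by simp
    then show ?thesis using infinity by simp
  qed (simp add: infinity)
qed

context fprod
begin

definition QF :: "nat \<Rightarrow> 'i \<Rightarrow> 'a set monoid" where "QF n i = A i Mod Tor (A i) n"
definition HF :: "nat \<Rightarrow> 'i \<Rightarrow> 'a \<Rightarrow> 'a set" where "HF n i a = Tor (A i) n #>\<^bsub>A i\<^esub> a"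
definition MM :: "nat \<Rightarrow> ('i \<times> 'a) list set" where
  "MM n = normal_closure F (\<Union>i\<in>I. ins i ` Tor (A i) n)"

lemma gen_sub: "(\<Union>i\<in>I. ins i ` Tor (A i) n) \<subseteq> carrier F"
proof (rule UN_least)
  fix i assume i: "i \<in> I"
  have "Tor (A i) n \<subseteq> carrier (A i)" by (rule Tor_sub_carrier[OF grp[OF i]])
  then show "ins i ` Tor (A i) n \<subseteq> carrier F" using ins_closed[OF i] by auto
qed

lemma MM_normal: "MM n \<lhd> F"
  unfolding MM_def by (rule ncl_normal[OF group_F gen_sub])

lemma ins_MM: "i \<in> I \<Longrightarrow> a \<in> Tor (A i) n \<Longrightarrow> ins i a \<in> MM n"
  unfolding MM_def using ncl_sub[OF gen_sub group_F] by blast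

lemma MM_mono: "m \<le> n \<Longrightarrow> MM m \<subseteq> MM n"
  unfolding MM_def
proof (rule ncl_mono[OF group_F gen_sub])
  assume mn: "m \<le> n"
  have "Tor (A i) m \<subseteq> Tor (A i) n" if "i \<in> I" for i using Tor_mono[OF grp[OF that] mn] .
  then show "(\<Union>i\<in>I. ins i ` Tor (A i) m) \<subseteq> (\<Union>i\<in>I. ins i ` Tor (A i) n)" by blast
qed

lemma MM_Tor: "MM n \<subseteq> Tor F n"
  unfolding MM_def
proof (rule ncl_least[OF Tor_normal[OF group_F]])
  show "(\<Union>i\<in>I. ins i ` Tor (A i) n) \<subseteq> Tor F n"
    using hom_Tor[OF grp group_F ins_hom] by blast
qed

lemma fhom_n: "fhom I A (QF n) (HF n)"
proof -
  have Q: "fprod I (QF n)"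
  proof (rule fprod.intro)
    fix i assume i: "i \<in> I"
    show "group (QF n i)" unfolding QF_def by (rule normal.factorgroup_is_group[OF Tor_normal[OF grp[OF i]]])
  qed
  have "fhom_axioms I A (QF n) (HF n)"
  proof
    fix i assume i: "i \<in> I"
    interpret N: normal "Tor (A i) n" "A i" using Tor_normal grp i by blast
    show "HF n i \<in> hom (A i) (QF n i)" unfolding HF_def QF_def by (rule N.r_coset_hom_Mod)
    show "HF n i ` carrier (A i) = carrier (QF n i)" unfolding HF_def QF_def
      by (auto simp: FactGroup_def RCOSETS_def)
  qed
  then show ?thesis unfolding fhom_def using Q fprod_axioms by blast
qed

lemma KS_n: "fhom.KS I A (QF n) (HF n) = (\<Union>i\<in>I. ins i ` Tor (A i) n)"
proof -
  have "{a \<in> carrier (A i). HF n i a = \<one>\<^bsub>QF n i\<^esub>} = Tor (A i) n" if i: "i \<in> I" for i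
  proof -
    have N: "Tor (A i) n \<lhd> A i" using Tor_normal grp i by blast
    show ?thesis unfolding HF_def QF_def one_FactGroup
      using rcos_eq_iff[OF N] Tor_sub_carrier[OF grp[OF i]] by blast
  qed
  then show ?thesis unfolding fhom.KS_def[OF fhom_n] by (intro SUP_cong refl) simp
qed

end


context fprod
begin

lemma torsion_step:
  fixes k :: nat
  assumes g: "RW g" and k: "k > 0" and gk: "g [^]\<^bsub>F\<^esub> k \<in> MM m"
  shows "g \<in> MM m \<or> (\<exists>u i a. RW u \<and> i \<in> I \<and> a \<in> Tor (A i) (Suc m) \<and>
            g \<otimes>\<^bsub>F\<^esub> inv\<^bsub>F\<^esub> (u \<otimes>\<^bsub>F\<^esub> ins i a \<otimes>\<^bsub>F\<^esub> inv\<^bsub>F\<^esub> u) \<in> MM m)"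
proof -
  interpret q: fhom I A "QF m" "HF m" by (rule fhom_n)
  interpret F: group F by (rule group_F)
  interpret BF: group q.B.F by (rule q.B.group_F)
  interpret p: group_hom F q.B.F q.phi by (rule q.phi_group_hom)
  have kern: "w \<in> MM m" if "RW w" "q.phi w = []" for w
    using q.phi_kernel[OF that] unfolding KS_n MM_def .
  have gens_ker: "(\<Union>i\<in>I. ins i ` Tor (A i) m) \<subseteq> kernel F q.B.F q.phi"
  proof (rule UN_least)
    fix i assume i: "i \<in> I"
    have N: "Tor (A i) m \<lhd> A i" using Tor_normal grp i by blast
    show "ins i ` Tor (A i) m \<subseteq> kernel F q.B.F q.phi"
    proof
      fix x assume "x \<in> ins i ` Tor (A i) m"
      then obtain a where a: "a \<in> Tor (A i) m" "x = ins i a" by blast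
      have ac: "a \<in> carrier (A i)" using a Tor_sub_carrier[OF grp[OF i]] by blast
      have "HF m i a = \<one>\<^bsub>QF m i\<^esub>" unfolding HF_def QF_def one_FactGroup
        using rcos_eq_iff[OF N ac] a by blast
      then have "q.phi x = []" using a q.phi_ins[OF i ac] q.B.ins_eq_Nil by simp
      then show "x \<in> kernel F q.B.F q.phi" unfolding kernel_def using a ins_closed[OF i ac] by simp
    qed
  qed
  have MM_ker: "MM m \<subseteq> kernel F q.B.F q.phi" unfolding MM_def
    by (rule ncl_least[OF p.normal_kernel gens_ker])
  have gc: "g \<in> carrier F" using g by simp
  have "q.phi g [^]\<^bsub>q.B.F\<^esub> k = q.phi (g [^]\<^bsub>F\<^esub> k)" by (rule p.hom_nat_pow[OF gc, symmetric])
  also have "\<dots> = []" using MM_ker gk unfolding kernel_def by auto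
  finally have pk: "q.phi g [^]\<^bsub>q.B.F\<^esub> k = []" .
  have pg: "q.B.RW (q.phi g)" using p.hom_closed[OF gc] by simp
  from q.B.torsion[OF pg k pk] show ?thesis
  proof
    assume "q.phi g = []" then show ?thesis using kern g by blast
  next
    assume "\<exists>u i c. q.B.RW u \<and> i \<in> I \<and> c \<in> carrier (QF m i) \<and> c [^]\<^bsub>QF m i\<^esub> k = \<one>\<^bsub>QF m i\<^esub> \<and>
            q.phi g = u \<otimes>\<^bsub>q.B.F\<^esub> q.B.ins i c \<otimes>\<^bsub>q.B.F\<^esub> inv\<^bsub>q.B.F\<^esub> u"
    then obtain u' i c where u': "q.B.RW u'" and i: "i \<in> I" and c: "c \<in> carrier (QF m i)"
      and ck: "c [^]\<^bsub>QF m i\<^esub> k = \<one>\<^bsub>QF m i\<^esub>"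
      and pge: "q.phi g = u' \<otimes>\<^bsub>q.B.F\<^esub> q.B.ins i c \<otimes>\<^bsub>q.B.F\<^esub> inv\<^bsub>q.B.F\<^esub> u'" by blast
    have N: "Tor (A i) m \<lhd> A i" using Tor_normal grp i by blast
    interpret AI: group "A i" using grp i by blast
    have "c \<in> HF m i ` carrier (A i)" using q.h_surj[OF i] c by simp
    then obtain a where a: "a \<in> carrier (A i)" "c = HF m i a" by (elim imageE) simp
    have "Tor (A i) m #>\<^bsub>A i\<^esub> (a [^]\<^bsub>A i\<^esub> k) = Tor (A i) m"
      using ck rcos_pow_Mod[OF N a(1), of k] unfolding a(2) HF_def QF_def one_FactGroup by simp
    then have "a [^]\<^bsub>A i\<^esub> k \<in> Tor (A i) m" using rcos_eq_iff[OF N] a(1) by simp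
    then have "a \<in> TorS (A i) (Tor (A i) m)" unfolding TorS_def using a(1) k by blast
    then have aT: "a \<in> Tor (A i) (Suc m)" unfolding Tor_Suc[OF grp[OF i]]
      using ncl_sub[OF TorS_sub grp[OF i]] by blast
    obtain u where u: "RW u" "q.phi u = u'" using q.phi_surj[OF u'] by blast
    have uc: "u \<in> carrier F" using u by simp
    have ic: "ins i a \<in> carrier F" using ins_closed[OF i a(1)] by simp
    let ?t = "u \<otimes>\<^bsub>F\<^esub> ins i a \<otimes>\<^bsub>F\<^esub> inv\<^bsub>F\<^esub> u"
    have tc: "?t \<in> carrier F" using uc ic by (simp del: F_mult F_carrier F_one)
    have "q.phi ?t = q.phi u \<otimes>\<^bsub>q.B.F\<^esub> q.phi (ins i a) \<otimes>\<^bsub>q.B.F\<^esub> inv\<^bsub>q.B.F\<^esub> q.phi u"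
      using uc ic by (simp del: F_mult F_carrier F_one q.B.F_mult q.B.F_carrier q.B.F_one)
    also have "\<dots> = q.phi g" unfolding pge u(2) q.phi_ins[OF i a(1)] a(2) ..
    finally have pt: "q.phi ?t = q.phi g" .
    have d: "g \<otimes>\<^bsub>F\<^esub> inv\<^bsub>F\<^esub> ?t \<in> carrier F" using gc tc by (simp del: F_mult F_carrier F_one)
    have "q.phi (g \<otimes>\<^bsub>F\<^esub> inv\<^bsub>F\<^esub> ?t) = q.phi g \<otimes>\<^bsub>q.B.F\<^esub> inv\<^bsub>q.B.F\<^esub> q.phi ?t"
      using gc tc by (simp del: F_mult F_carrier F_one q.B.F_mult q.B.F_carrier q.B.F_one)
    also have "\<dots> = \<one>\<^bsub>q.B.F\<^esub>" unfolding pt using p.hom_closed[OF gc]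
      by (simp del: F_mult F_carrier F_one q.B.F_mult q.B.F_carrier q.B.F_one)
    finally have "q.phi (g \<otimes>\<^bsub>F\<^esub> inv\<^bsub>F\<^esub> ?t) = []" by simp
    moreover have "RW (g \<otimes>\<^bsub>F\<^esub> inv\<^bsub>F\<^esub> ?t)" using d by simp
    ultimately have "g \<otimes>\<^bsub>F\<^esub> inv\<^bsub>F\<^esub> ?t \<in> MM m" using kern by blast
    then show ?thesis using u(1) i aT by blast
  qed
qed

end


context fprod
begin

lemma Tor_MM: "Tor F m \<subseteq> MM m"
proof (induction m)
  case 0
  interpret M: normal "MM 0" F by (rule MM_normal)
  have "\<one>\<^bsub>F\<^esub> \<in> MM 0" by (rule subgroup.one_closed[OF normal_imp_subgroup[OF MM_normal]])
  then show ?case by simp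
next
  case (Suc m)
  interpret F: group F by (rule group_F)
  interpret M: normal "MM (Suc m)" F by (rule MM_normal)
  have sub: "MM m \<subseteq> MM (Suc m)" by (rule MM_mono) simp
  have "TorS F (Tor F m) \<subseteq> MM (Suc m)"
  proof
    fix g assume "g \<in> TorS F (Tor F m)"
    then obtain k :: nat where g: "g \<in> carrier F" "k > 0" "g [^]\<^bsub>F\<^esub> k \<in> Tor F m" unfolding TorS_def by blast
    have gk: "g [^]\<^bsub>F\<^esub> k \<in> MM m" using g(3) Suc by blast
    have gr: "RW g" using g(1) by simp
    from torsion_step[OF gr g(2) gk] show "g \<in> MM (Suc m)"
    proof
      assume "g \<in> MM m" then show ?thesis using sub by blast
    next
      assume "\<exists>u i a. RW u \<and> i \<in> I \<and> a \<in> Tor (A i) (Suc m) \<and>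
            g \<otimes>\<^bsub>F\<^esub> inv\<^bsub>F\<^esub> (u \<otimes>\<^bsub>F\<^esub> ins i a \<otimes>\<^bsub>F\<^esub> inv\<^bsub>F\<^esub> u) \<in> MM m"
      then obtain u i a where u: "RW u" "i \<in> I" "a \<in> Tor (A i) (Suc m)"
        and d: "g \<otimes>\<^bsub>F\<^esub> inv\<^bsub>F\<^esub> (u \<otimes>\<^bsub>F\<^esub> ins i a \<otimes>\<^bsub>F\<^esub> inv\<^bsub>F\<^esub> u) \<in> MM m" by blast
      let ?t = "u \<otimes>\<^bsub>F\<^esub> ins i a \<otimes>\<^bsub>F\<^esub> inv\<^bsub>F\<^esub> u"
      have uc: "u \<in> carrier F" using u by simp
      have "ins i a \<in> MM (Suc m)" by (rule ins_MM[OF u(2,3)])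
      then have tM: "?t \<in> MM (Suc m)" using M.inv_op_closed2[OF uc] by blast
      have tc: "?t \<in> carrier F" using tM M.subset by blast
      have dM: "g \<otimes>\<^bsub>F\<^esub> inv\<^bsub>F\<^esub> ?t \<in> MM (Suc m)" using d sub by blast
      have "g = (g \<otimes>\<^bsub>F\<^esub> inv\<^bsub>F\<^esub> ?t) \<otimes>\<^bsub>F\<^esub> ?t"
        using g(1) tc by (simp del: F_mult F_carrier F_one add: F.m_assoc)
      then show ?thesis using M.m_closed[OF dM tM] by simp
    qed
  qed
  then show ?case unfolding Tor_Suc[OF group_F] by (rule ncl_least[OF MM_normal])
qed

lemma PT_F: assumes "\<And>i. i \<in> I \<Longrightarrow> PT (A i) n" shows "PT F n"
proof -
  interpret F: group F by (rule group_F)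
  interpret M: normal "MM n" F by (rule MM_normal)
  have "TorS F (Tor F n) \<subseteq> Tor F n"
  proof
    fix g assume "g \<in> TorS F (Tor F n)"
    then obtain k :: nat where g: "g \<in> carrier F" "k > 0" "g [^]\<^bsub>F\<^esub> k \<in> Tor F n" unfolding TorS_def by blast
    have gk: "g [^]\<^bsub>F\<^esub> k \<in> MM n" using g(3) Tor_MM by blast
    have gr: "RW g" using g(1) by simp
    have "g \<in> MM n"
    using torsion_step[OF gr g(2) gk]
    proof
      assume "g \<in> MM n" then show ?thesis .
    next
      assume "\<exists>u i a. RW u \<and> i \<in> I \<and> a \<in> Tor (A i) (Suc n) \<and>
            g \<otimes>\<^bsub>F\<^esub> inv\<^bsub>F\<^esub> (u \<otimes>\<^bsub>F\<^esub> ins i a \<otimes>\<^bsub>F\<^esub> inv\<^bsub>F\<^esub> u) \<in> MM n"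
      then obtain u i a where u: "RW u" "i \<in> I" "a \<in> Tor (A i) (Suc n)"
        and d: "g \<otimes>\<^bsub>F\<^esub> inv\<^bsub>F\<^esub> (u \<otimes>\<^bsub>F\<^esub> ins i a \<otimes>\<^bsub>F\<^esub> inv\<^bsub>F\<^esub> u) \<in> MM n" by blast
      let ?t = "u \<otimes>\<^bsub>F\<^esub> ins i a \<otimes>\<^bsub>F\<^esub> inv\<^bsub>F\<^esub> u"
      have uc: "u \<in> carrier F" using u by simp
      have "a \<in> Tor (A i) n" using u(3) assms[OF u(2)] PT_iff[OF grp[OF u(2)]] by blast
      then have "ins i a \<in> MM n" by (rule ins_MM[OF u(2)])
      then have tM: "?t \<in> MM n" using M.inv_op_closed2[OF uc] by blast
      have tc: "?t \<in> carrier F" using tM M.subset by blast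
      have "g = (g \<otimes>\<^bsub>F\<^esub> inv\<^bsub>F\<^esub> ?t) \<otimes>\<^bsub>F\<^esub> ?t"
        using g(1) tc by (simp del: F_mult F_carrier F_one add: F.m_assoc)
      then show ?thesis using M.m_closed[OF d tM] by simp
    qed
    then show "g \<in> Tor F n" using MM_Tor by blast
  qed
  then have "Tor F (Suc n) \<subseteq> Tor F n" unfolding Tor_Suc[OF group_F]
    by (rule ncl_least[OF Tor_normal[OF group_F]])
  then show ?thesis using PT_iff[OF group_F] by blast
qed

lemma PT_A: assumes P: "PT F n" and i: "i \<in> I" shows "PT (A i) n"
proof -
  interpret AI: group "A i" using grp i by blast
  define f where "f = (\<lambda>j a. if j = i then a else \<one>\<^bsub>A i\<^esub>)"
  have fh: "f j \<in> hom (A j) (A i)" if j: "j \<in> I" for j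
  proof (cases "j = i")
    case True
    then show ?thesis unfolding f_def by (auto intro!: homI)
  next
    case False
    then show ?thesis unfolding f_def by (auto intro!: homI)
  qed
  let ?pi = "ext (A i) f"
  have pih: "?pi \<in> hom F (A i)" by (rule ext_hom[OF grp[OF i] fh])
  have "Tor (A i) (Suc n) \<subseteq> Tor (A i) n"
  proof
    fix x assume x: "x \<in> Tor (A i) (Suc n)"
    have xc: "x \<in> carrier (A i)" using x Tor_sub_carrier[OF grp[OF i]] by blast
    have "ins i x \<in> Tor F (Suc n)" using hom_Tor[OF grp[OF i] group_F ins_hom[OF i]] x by blast
    then have "ins i x \<in> Tor F n" using P PT_iff[OF group_F] by blast
    then have "?pi (ins i x) \<in> Tor (A i) n" using hom_Tor[OF group_F grp[OF i] pih] by blast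
    moreover have "?pi (ins i x) = x" using ext_ins[OF grp[OF i] fh i xc] by (simp add: f_def)
    ultimately show "x \<in> Tor (A i) n" by simp
  qed
  then show ?thesis using PT_iff[OF grp[OF i]] by blast
qed

end

theorem corollary3p15:
  fixes I :: "'i set" and A :: "'i \<Rightarrow> ('a, 'b) monoid_scheme"
  assumes "\<And>i. i \<in> I \<Longrightarrow> group (A i)"
  shows "TorLen (free_product I A) = (SUP i\<in>I. TorLen (A i))"
proof -
  interpret fprod I A by (rule fprod.intro) (rule assms)
  show ?thesis
  proof (rule enat_eq_by_le)
    fix n
    have "TorLen F \<le> enat n \<longleftrightarrow> PT F n" by (rule TorLen_le_iff[OF group_F])
    also have "\<dots> \<longleftrightarrow> (\<forall>i\<in>I. PT (A i) n)" using PT_F PT_A by blast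
    also have "\<dots> \<longleftrightarrow> (\<forall>i\<in>I. TorLen (A i) \<le> enat n)" using TorLen_le_iff grp by blast
    also have "\<dots> \<longleftrightarrow> (SUP i\<in>I. TorLen (A i)) \<le> enat n" by (simp add: SUP_le_iff)
    finally show "TorLen F \<le> enat n \<longleftrightarrow> (SUP i\<in>I. TorLen (A i)) \<le> enat n" .
  qed
qed

end
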